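(* Let $X$ be a non-empty set, $\sigma : X \to X$ a bijection, and $A \subseteq \mathbb{C}^X$ a subalgebra (under pointwise operations) such that $h\circ\sigma \in A$ and $h \circ \sigma^{-1} \in A$ for all $h \in A$. Let $\widetilde{\sigma} : A \to A$ be the automorphism $\widetilde{\sigma}(f) = f\circ \sigma^{-1}$. Then the unique maximal abelian subalgebra of $A \rtimes_{\widetilde{\sigma}} \mathbb{Z}$ containing $A$ (namely the commutant $A'$ of $A$) is precisely \[ A' = \Big\{ \sum_{n\in\mathbb{Z}} f_n\delta^n \in A \rtimes_{\widetilde{\sigma}}\mathbb{Z} \;:\; \text{for all } n \in \mathbb{Z},\ f_n \text{ vanishes identically on } \mathrm{Sep}_A^n(X)\Big\}. \]
   Context: For $n \in \mathbb{Z}$, $\mathrm{Sep}_A^n(X) = \{x \in X : \exists h \in A \text{ with } h(x) \neq \widetilde{\sigma}^n(h)(x)\}$ (for $n=0$ this set is empty). The crossed product $A \rtimes_{\widetilde{\sigma}} \mathbb{Z}$ is the set of finitely supported functions $f:\mathbb{Z}\to A$, written $f=\sum_n f_n\delta^n$, with pointwise addition and scalar multiplication and multiplication $(f*g)(n)=\sum_{k} f(k)\cdot\widetilde{\sigma}^k(g(n-k))$, i.e. $(f_n\delta^n)*(g_m\delta^m)=f_n\,\widetilde{\sigma}^n(g_m)\,\delta^{n+m}$. $A$ is regarded as the subalgebra $\{f_0\delta^0 : f_0 \in A\}$. *)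

theory Defs
  imports Complex_Main
begin

definition zpow :: "('x \<Rightarrow> 'x) \<Rightarrow> int \<Rightarrow> 'x \<Rightarrow> 'x" where
  "zpow \<sigma> n = (if 0 \<le> n then \<sigma> ^^ nat n else inv \<sigma> ^^ nat (- n))"

definition sigt :: "('x \<Rightarrow> 'x) \<Rightarrow> int \<Rightarrow> ('x \<Rightarrow> complex) \<Rightarrow> ('x \<Rightarrow> complex)" where
  "sigt \<sigma> n h = h \<circ> zpow \<sigma> (- n)"

definition fun_subalgebra :: "('x \<Rightarrow> complex) set \<Rightarrow> bool" where
  "fun_subalgebra A \<longleftrightarrow> (\<lambda>_. 0) \<in> A \<and>
     (\<forall>f\<in>A. \<forall>g\<in>A. (\<lambda>x. f x + g x) \<in> A) \<and>
     (\<forall>c. \<forall>f\<in>A. (\<lambda>x. c * f x) \<in> A) \<and>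
     (\<forall>f\<in>A. \<forall>g\<in>A. (\<lambda>x. f x * g x) \<in> A)"

definition Sep :: "('x \<Rightarrow> complex) set \<Rightarrow> ('x \<Rightarrow> 'x) \<Rightarrow> int \<Rightarrow> 'x set" where
  "Sep A \<sigma> n = {x. \<exists>h\<in>A. h x \<noteq> sigt \<sigma> n h x}"

text \<open>Crossed product A x_sigma-tilde Z: finitely supported functions Z -> A.\<close>
definition crossed :: "('x \<Rightarrow> complex) set \<Rightarrow> (int \<Rightarrow> 'x \<Rightarrow> complex) set" where
  "crossed A = {f. finite {n. f n \<noteq> (\<lambda>_. 0)} \<and> (\<forall>n. f n \<in> A)}"

definition cp_mult :: "('x \<Rightarrow> 'x) \<Rightarrow> (int \<Rightarrow> 'x \<Rightarrow> complex) \<Rightarrow> (int \<Rightarrow> 'x \<Rightarrow> complex)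
    \<Rightarrow> (int \<Rightarrow> 'x \<Rightarrow> complex)" where
  "cp_mult \<sigma> f g = (\<lambda>n x. \<Sum>k\<in>{k. f k \<noteq> (\<lambda>_. 0)}. f k x * sigt \<sigma> k (g (n - k)) x)"

definition embed :: "('x \<Rightarrow> complex) \<Rightarrow> (int \<Rightarrow> 'x \<Rightarrow> complex)" where
  "embed a = (\<lambda>n. if n = 0 then a else (\<lambda>_. 0))"

definition commutant :: "('x \<Rightarrow> complex) set \<Rightarrow> ('x \<Rightarrow> 'x) \<Rightarrow> (int \<Rightarrow> 'x \<Rightarrow> complex) set" where
  "commutant A \<sigma> = {f \<in> crossed A. \<forall>a\<in>A. cp_mult \<sigma> f (embed a) = cp_mult \<sigma> (embed a) f}"

definition cp_subalgebra :: "('x \<Rightarrow> complex) set \<Rightarrow> ('x \<Rightarrow> 'x) \<Rightarrow> (int \<Rightarrow> 'x \<Rightarrow> complex) set \<Rightarrow> bool" where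
  "cp_subalgebra A \<sigma> B \<longleftrightarrow> B \<subseteq> crossed A \<and> (\<lambda>_ _. 0) \<in> B \<and>
     (\<forall>f\<in>B. \<forall>g\<in>B. (\<lambda>n x. f n x + g n x) \<in> B) \<and>
     (\<forall>c. \<forall>f\<in>B. (\<lambda>n x. c * f n x) \<in> B) \<and>
     (\<forall>f\<in>B. \<forall>g\<in>B. cp_mult \<sigma> f g \<in> B)"

definition cp_commutative :: "('x \<Rightarrow> 'x) \<Rightarrow> (int \<Rightarrow> 'x \<Rightarrow> complex) set \<Rightarrow> bool" where
  "cp_commutative \<sigma> B \<longleftrightarrow> (\<forall>f\<in>B. \<forall>g\<in>B. cp_mult \<sigma> f g = cp_mult \<sigma> g f)"

end

theory Submission
  imports Defs
begin

lemma zpow_succ: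
  assumes "bij \<sigma>" shows "zpow \<sigma> (n+1) = \<sigma> \<circ> zpow \<sigma> n"
proof (cases "0 \<le> n")
  case True
  then have "nat (n+1) = Suc (nat n)" by simp
  then show ?thesis using True by (simp add: zpow_def)
next
  case False
  define m where "m = nat (-n-1)"
  have m: "n = - int m - 1" using False m_def by simp
  have s: "\<sigma> \<circ> inv \<sigma> = id" using assms by (metis bij_is_surj surj_iff)
  have "nat (-n) = Suc m" using m by simp
  then have z1: "zpow \<sigma> n = inv \<sigma> \<circ> inv \<sigma> ^^ m" using False by (simp add: zpow_def)
  have "nat (-(n+1)) = m" using m by simp
  moreover have "\<not> 0 \<le> n + 1 \<or> m = 0" using m by auto
  ultimately have z2: "zpow \<sigma> (n+1) = inv \<sigma> ^^ m" by (auto simp: zpow_def m)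
  have "\<sigma> \<circ> zpow \<sigma> n = (\<sigma> \<circ> inv \<sigma>) \<circ> inv \<sigma> ^^ m" by (simp only: z1 comp_assoc)
  then show ?thesis using s z2 by simp
qed

lemma zpow_pred:
  assumes "bij \<sigma>" shows "zpow \<sigma> (n-1) = inv \<sigma> \<circ> zpow \<sigma> n"
proof -
  have i: "inv \<sigma> \<circ> \<sigma> = id" using assms by (simp add: bij_is_inj)
  have "zpow \<sigma> n = \<sigma> \<circ> zpow \<sigma> (n-1)" using zpow_succ[OF assms, of "n-1"] by simp
  then have "inv \<sigma> \<circ> zpow \<sigma> n = (inv \<sigma> \<circ> \<sigma>) \<circ> zpow \<sigma> (n-1)" by (simp add: o_assoc)
  then show ?thesis using i by simp
qed

lemma zpow_add:
  assumes "bij \<sigma>" shows "zpow \<sigma> (a+b) = zpow \<sigma> a \<circ> zpow \<sigma> b"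
proof (induction a rule: int_induct[where k=0])
  case base then show ?case by (simp add: zpow_def)
next
  case (step1 i)
  have "zpow \<sigma> (i+1+b) = zpow \<sigma> (i+b+1)" by (simp add: ac_simps)
  also have "\<dots> = \<sigma> \<circ> zpow \<sigma> (i+b)" by (rule zpow_succ[OF assms])
  also have "\<dots> = zpow \<sigma> (i+1) \<circ> zpow \<sigma> b" by (simp only: step1 zpow_succ[OF assms, of i] comp_assoc)
  finally show ?case .
next
  case (step2 i)
  have "zpow \<sigma> (i-1+b) = zpow \<sigma> (i+b-1)" by (rule arg_cong[where f="zpow \<sigma>"]) simp
  also have "\<dots> = inv \<sigma> \<circ> zpow \<sigma> (i+b)" by (rule zpow_pred[OF assms])
  also have "\<dots> = zpow \<sigma> (i-1) \<circ> zpow \<sigma> b" by (simp only: step2 zpow_pred[OF assms, of i] comp_assoc)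
  finally show ?case .
qed

lemma zpow_0: "zpow \<sigma> 0 = id" by (simp add: zpow_def)

lemma A_zpow:
  assumes "bij \<sigma>" "\<forall>h\<in>A. h \<circ> \<sigma> \<in> A" "\<forall>h\<in>A. h \<circ> inv \<sigma> \<in> A"
  shows "h \<in> A \<Longrightarrow> h \<circ> zpow \<sigma> m \<in> A"
proof (induction m rule: int_induct[where k=0])
  case base then show ?case by (simp add: zpow_0)
next
  case (step1 i)
  have "zpow \<sigma> (i+1) = zpow \<sigma> i \<circ> \<sigma>" using zpow_add[OF assms(1), of i 1] by (simp add: zpow_def)
  then show ?case using step1 assms(2) by (metis o_assoc)
next
  case (step2 i)
  have "zpow \<sigma> (i-1) = zpow \<sigma> i \<circ> inv \<sigma>" using zpow_add[OF assms(1), of i "-1"] by (simp add: zpow_def)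
  then show ?case using step2 assms(3) by (metis o_assoc)
qed

lemma A_sum:
  assumes "fun_subalgebra A" "finite K" "\<And>k. k \<in> K \<Longrightarrow> (\<lambda>x. F k x) \<in> A"
  shows "(\<lambda>x. \<Sum>k\<in>K. F k x) \<in> A"
  using assms(2,3)
proof (induction K rule: finite_induct)
  case empty then show ?case using assms(1) by (simp add: fun_subalgebra_def)
next
  case (insert k K)
  then show ?case using assms(1) unfolding fun_subalgebra_def by (simp add: sum.insert)
qed

lemma cp_mult_superset:
  assumes "finite T" "{k. f k \<noteq> (\<lambda>_. 0)} \<subseteq> T"
  shows "cp_mult \<sigma> f g n x = (\<Sum>k\<in>T. f k x * sigt \<sigma> k (g (n - k)) x)"
  unfolding cp_mult_def
  by (rule sum.mono_neutral_left) (use assms in auto)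

lemma crossed_fin: "f \<in> crossed A \<Longrightarrow> finite {k. f k \<noteq> (\<lambda>_. 0)}"
  by (simp add: crossed_def)

lemma mult_embed_right:
  assumes "f \<in> crossed A"
  shows "cp_mult \<sigma> f (embed a) n x = f n x * sigt \<sigma> n a x"
proof -
  have "cp_mult \<sigma> f (embed a) n x = (\<Sum>k\<in>insert n {k. f k \<noteq> (\<lambda>_. 0)}. f k x * sigt \<sigma> k (embed a (n - k)) x)"
    by (rule cp_mult_superset) (use crossed_fin[OF assms] in auto)
  also have "\<dots> = (\<Sum>k\<in>insert n {k. f k \<noteq> (\<lambda>_. 0)}. if k = n then f n x * sigt \<sigma> n a x else 0)"
    by (rule sum.cong) (auto simp: embed_def sigt_def)
  also have "\<dots> = f n x * sigt \<sigma> n a x" using crossed_fin[OF assms] by simp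
  finally show ?thesis .
qed

lemma mult_embed_left:
  shows "cp_mult \<sigma> (embed a) f n x = a x * f n x"
proof -
  have "cp_mult \<sigma> (embed a) f n x = (\<Sum>k\<in>{0}. embed a k x * sigt \<sigma> k (f (n - k)) x)"
    by (rule cp_mult_superset) (auto simp: embed_def)
  then show ?thesis by (simp add: embed_def sigt_def zpow_0)
qed

lemma sep_iff: "x \<notin> Sep A \<sigma> n \<longleftrightarrow> (\<forall>h\<in>A. h x = h (zpow \<sigma> (-n) x))"
  by (auto simp: Sep_def sigt_def)

lemma comm_char:
  assumes "f \<in> crossed A"
  shows "(\<forall>a\<in>A. cp_mult \<sigma> f (embed a) = cp_mult \<sigma> (embed a) f) \<longleftrightarrow> (\<forall>n. \<forall>x\<in>Sep A \<sigma> n. f n x = 0)"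
proof
  assume H: "\<forall>a\<in>A. cp_mult \<sigma> f (embed a) = cp_mult \<sigma> (embed a) f"
  show "\<forall>n. \<forall>x\<in>Sep A \<sigma> n. f n x = 0"
  proof (intro allI ballI)
    fix n x assume "x \<in> Sep A \<sigma> n"
    then obtain h where h: "h \<in> A" "h x \<noteq> sigt \<sigma> n h x" by (auto simp: Sep_def)
    have "cp_mult \<sigma> f (embed h) n x = cp_mult \<sigma> (embed h) f n x" using H h by simp
    then have "f n x * sigt \<sigma> n h x = h x * f n x"
      by (simp add: mult_embed_right[OF assms] mult_embed_left)
    then have "f n x * (sigt \<sigma> n h x - h x) = 0" by (simp add: algebra_simps)
    then show "f n x = 0" using h by simp
  qed
next
  assume H: "\<forall>n. \<forall>x\<in>Sep A \<sigma> n. f n x = 0"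
  show "\<forall>a\<in>A. cp_mult \<sigma> f (embed a) = cp_mult \<sigma> (embed a) f"
  proof (intro ballI ext)
    fix a n x assume a: "a \<in> A"
    show "cp_mult \<sigma> f (embed a) n x = cp_mult \<sigma> (embed a) f n x"
    proof (cases "f n x = 0")
      case True then show ?thesis by (simp add: mult_embed_right[OF assms] mult_embed_left)
    next
      case False
      then have "x \<notin> Sep A \<sigma> n" using H by auto
      then have "sigt \<sigma> n a x = a x" using a by (auto simp: Sep_def)
      then show ?thesis by (simp add: mult_embed_right[OF assms] mult_embed_left)
    qed
  qed
qed

lemma term_eq:
  assumes "\<forall>n. \<forall>x\<in>Sep A \<sigma> n. f n x = 0" "h \<in> A"
  shows "f k x * sigt \<sigma> k h x = f k x * h x"
proof (cases "f k x = 0")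
  case False
  then have "x \<notin> Sep A \<sigma> k" using assms by auto
  then show ?thesis using assms(2) by (auto simp: Sep_def)
qed simp

theorem theorem3p3:
  fixes \<sigma> :: "'x \<Rightarrow> 'x" and A :: "('x \<Rightarrow> complex) set"
  assumes "bij \<sigma>"
    and "fun_subalgebra A"
    and "\<forall>h\<in>A. h \<circ> \<sigma> \<in> A"
    and "\<forall>h\<in>A. h \<circ> inv \<sigma> \<in> A"
  defines "S \<equiv> {f \<in> crossed A. \<forall>n. \<forall>x\<in>Sep A \<sigma> n. f n x = 0}"
  shows "commutant A \<sigma> = S
    \<and> cp_subalgebra A \<sigma> S \<and> embed ` A \<subseteq> S \<and> cp_commutative \<sigma> S
    \<and> (\<forall>B. cp_subalgebra A \<sigma> B \<and> embed ` A \<subseteq> B \<and> cp_commutative \<sigma> B \<longrightarrow> B \<subseteq> S)"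
proof -
  have FA: "(\<lambda>_. 0) \<in> A" "\<And>f g. f \<in> A \<Longrightarrow> g \<in> A \<Longrightarrow> (\<lambda>x. f x + g x) \<in> A"
    "\<And>c f. f \<in> A \<Longrightarrow> (\<lambda>x. c * f x) \<in> A"
    "\<And>f g. f \<in> A \<Longrightarrow> g \<in> A \<Longrightarrow> (\<lambda>x. f x * g x) \<in> A"
    using assms(2) unfolding fun_subalgebra_def by auto
  have C: "commutant A \<sigma> = S"
    unfolding commutant_def S_def using comm_char by blast
  have E: "embed ` A \<subseteq> S"
  proof
    fix y assume "y \<in> embed ` A"
    then obtain a where a: "a \<in> A" "y = embed a" by auto
    have "{n. embed a n \<noteq> (\<lambda>_. 0)} \<subseteq> {0}" by (auto simp: embed_def)
    then have "finite {n. embed a n \<noteq> (\<lambda>_. 0)}" by (rule finite_subset) simp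
    moreover have "\<forall>n. embed a n \<in> A" using a FA by (simp add: embed_def)
    moreover have "\<forall>n. \<forall>x\<in>Sep A \<sigma> n. embed a n x = 0"
      by (auto simp: embed_def Sep_def sigt_def zpow_0)
    ultimately show "y \<in> S" using a by (simp add: S_def crossed_def)
  qed
  have COMM: "cp_mult \<sigma> f g = cp_mult \<sigma> g f" if f: "f \<in> S" and g: "g \<in> S" for f g
  proof (intro ext)
    fix n x
    let ?sf = "{k. f k \<noteq> (\<lambda>_. 0)}" and ?sg = "{k. g k \<noteq> (\<lambda>_. 0)}"
    let ?r = "\<lambda>k::int. n - k"
    define U where "U = ?sf \<union> ?r ` ?sg"
    have ff: "finite ?sf" "finite ?sg" using f g by (auto simp: S_def crossed_def)
    have fU: "finite U" using ff by (simp add: U_def)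
    have "cp_mult \<sigma> f g n x = (\<Sum>k\<in>U. f k x * sigt \<sigma> k (g (n - k)) x)"
      by (rule cp_mult_superset) (use fU in \<open>auto simp: U_def\<close>)
    also have "\<dots> = (\<Sum>k\<in>U. f k x * g (n - k) x)"
      by (rule sum.cong[OF refl], rule term_eq) (use f g in \<open>auto simp: S_def crossed_def\<close>)
    finally have 1: "cp_mult \<sigma> f g n x = (\<Sum>k\<in>U. f k x * g (n - k) x)" .
    have "cp_mult \<sigma> g f n x = (\<Sum>j\<in>?r ` U. g j x * sigt \<sigma> j (f (n - j)) x)"
    proof (rule cp_mult_superset)
      show "finite (?r ` U)" using fU by simp
      show "?sg \<subseteq> ?r ` U"
      proof
        fix j assume "j \<in> ?sg"
        then have "n - j \<in> U" by (auto simp: U_def)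
        then show "j \<in> ?r ` U" by (intro image_eqI[of _ _ "n - j"]) auto
      qed
    qed
    also have "\<dots> = (\<Sum>j\<in>?r ` U. g j x * f (n - j) x)"
      by (rule sum.cong[OF refl], rule term_eq) (use f g in \<open>auto simp: S_def crossed_def\<close>)
    also have "\<dots> = (\<Sum>k\<in>U. g (n - k) x * f (n - (n - k)) x)"
      by (subst sum.reindex) (auto simp: inj_on_def)
    also have "\<dots> = (\<Sum>k\<in>U. f k x * g (n - k) x)" by (simp add: mult.commute)
    finally show "cp_mult \<sigma> f g n x = cp_mult \<sigma> g f n x" using 1 by simp
  qed
  have PROD: "cp_mult \<sigma> f g \<in> S" if f: "f \<in> S" and g: "g \<in> S" for f g
  proof -
    let ?sf = "{k. f k \<noteq> (\<lambda>_. 0)}" and ?sg = "{k. g k \<noteq> (\<lambda>_. 0)}"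
    have ff: "finite ?sf" "finite ?sg" using f g by (auto simp: S_def crossed_def)
    have fA: "\<And>k. f k \<in> A" and gA: "\<And>k. g k \<in> A" using f g by (auto simp: S_def crossed_def)
    have fS: "\<forall>n. \<forall>x\<in>Sep A \<sigma> n. f n x = 0" and gS: "\<forall>n. \<forall>x\<in>Sep A \<sigma> n. g n x = 0"
      using f g by (auto simp: S_def)
    have supp: "{n. cp_mult \<sigma> f g n \<noteq> (\<lambda>_. 0)} \<subseteq> (\<lambda>(k, j). k + j) ` (?sf \<times> ?sg)"
    proof
      fix n assume "n \<in> {n. cp_mult \<sigma> f g n \<noteq> (\<lambda>_. 0)}"
      then have nz: "cp_mult \<sigma> f g n \<noteq> (\<lambda>_. 0)" by (rule CollectD)
      have "\<exists>x. cp_mult \<sigma> f g n x \<noteq> 0"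
      proof (rule ccontr)
        assume H: "\<not> (\<exists>x. cp_mult \<sigma> f g n x \<noteq> 0)"
        have "cp_mult \<sigma> f g n = (\<lambda>_. 0)"
        proof (rule ext)
          fix x show "cp_mult \<sigma> f g n x = 0" using H by blast
        qed
        then show False using nz by contradiction
      qed
      then obtain x where "cp_mult \<sigma> f g n x \<noteq> 0" by (elim exE)
      then have "(\<Sum>k\<in>?sf. f k x * sigt \<sigma> k (g (n - k)) x) \<noteq> 0"
        unfolding cp_mult_def .
      then obtain k where k: "k \<in> ?sf" "f k x * sigt \<sigma> k (g (n - k)) x \<noteq> 0"
        by (rule sum.not_neutral_contains_not_neutral)
      have "g (n - k) \<noteq> (\<lambda>_. 0)"
      proof
        assume "g (n - k) = (\<lambda>_. 0)"
        then show False using k(2) by (simp add: sigt_def)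
      qed
      moreover have "f k \<noteq> (\<lambda>_. 0)" using k(1) by (rule CollectD)
      ultimately have mem: "(k, n - k) \<in> ?sf \<times> ?sg" by (intro SigmaI CollectI)
      show "n \<in> (\<lambda>(k, j). k + j) ` (?sf \<times> ?sg)"
      proof (rule image_eqI[of _ _ "(k, n - k)"])
        show "n = (\<lambda>(k, j). k + j) (k, n - k)" by simp
        show "(k, n - k) \<in> ?sf \<times> ?sg" by (rule mem)
      qed
    qed
    have fin: "finite {n. cp_mult \<sigma> f g n \<noteq> (\<lambda>_. 0)}"
      by (rule finite_subset[OF supp]) (use ff in simp)
    have inA: "cp_mult \<sigma> f g n \<in> A" for n
    proof -
      have "cp_mult \<sigma> f g n = (\<lambda>x. \<Sum>k\<in>?sf. f k x * (g (n - k) \<circ> zpow \<sigma> (- k)) x)"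
        by (simp add: cp_mult_def sigt_def)
      also have "\<dots> \<in> A"
      proof -
        have "(\<lambda>x. f k x * (g (n - k) \<circ> zpow \<sigma> (- k)) x) \<in> A" for k
          using FA(4)[OF fA A_zpow[OF assms(1,3,4) gA]] .
        then show ?thesis
          using A_sum[OF assms(2) ff(1), where F="\<lambda>k x. f k x * (g (n - k) \<circ> zpow \<sigma> (- k)) x"] by simp
      qed
      finally show ?thesis .
    qed
    have sep: "cp_mult \<sigma> f g n x = 0" if x: "x \<in> Sep A \<sigma> n" for n x
      unfolding cp_mult_def
    proof (rule sum.neutral, rule ballI)
      fix k
      show "f k x * sigt \<sigma> k (g (n - k)) x = 0"
      proof (rule ccontr)
        assume ne: "f k x * sigt \<sigma> k (g (n - k)) x \<noteq> 0"
        define y where "y = zpow \<sigma> (- k) x"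
        have sy: "sigt \<sigma> k (g (n - k)) x = g (n - k) y" by (simp add: sigt_def y_def)
        have nz: "f k x \<noteq> 0 \<and> g (n - k) y \<noteq> 0" using ne unfolding sy by simp
        have xk: "x \<notin> Sep A \<sigma> k"
        proof
          assume "x \<in> Sep A \<sigma> k"
          then have "f k x = 0" using fS by blast
          then show False using nz by simp
        qed
        have 1: "\<forall>h\<in>A. h x = h y" using xk unfolding sep_iff y_def .
        have yk: "y \<notin> Sep A \<sigma> (n - k)"
        proof
          assume "y \<in> Sep A \<sigma> (n - k)"
          then have "g (n - k) y = 0" using gS by blast
          then show False using nz by simp
        qed
        have 2: "\<forall>h\<in>A. h y = h (zpow \<sigma> (- (n - k)) y)" using yk unfolding sep_iff .
        have "zpow \<sigma> (- (n - k)) y = zpow \<sigma> (- (n - k) + - k) x"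
          unfolding y_def zpow_add[OF assms(1), of "- (n - k)" "- k"] by simp
        also have "- (n - k) + - k = - n" by simp
        finally have eq: "zpow \<sigma> (- (n - k)) y = zpow \<sigma> (- n) x" .
        have "\<forall>h\<in>A. h x = h (zpow \<sigma> (- n) x)"
        proof
          fix h
          assume hA: "h \<in> A"
          have "h x = h y" using bspec[OF 1 hA] .
          also have "\<dots> = h (zpow \<sigma> (- (n - k)) y)" using bspec[OF 2 hA] .
          also have "\<dots> = h (zpow \<sigma> (- n) x)" by (simp only: eq)
          finally show "h x = h (zpow \<sigma> (- n) x)" .
        qed
        then have "x \<notin> Sep A \<sigma> n" unfolding sep_iff .
        then show False using x by contradiction
      qed
    qed
    show ?thesis using fin inA sep by (simp add: S_def crossed_def)
  qed
  have SUB: "cp_subalgebra A \<sigma> S"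
    unfolding cp_subalgebra_def
  proof (intro conjI ballI allI)
    show "S \<subseteq> crossed A" by (auto simp: S_def)
    show "(\<lambda>_ _. 0) \<in> S" using FA by (simp add: S_def crossed_def)
  next
    fix f g assume f: "f \<in> S" and g: "g \<in> S"
    have "{n. (\<lambda>x. f n x + g n x) \<noteq> (\<lambda>_. 0)} \<subseteq> {k. f k \<noteq> (\<lambda>_. 0)} \<union> {k. g k \<noteq> (\<lambda>_. 0)}"
      by auto
    then have "finite {n. (\<lambda>x. f n x + g n x) \<noteq> (\<lambda>_. 0)}"
      by (rule finite_subset) (use f g in \<open>auto simp: S_def crossed_def\<close>)
    then show "(\<lambda>n x. f n x + g n x) \<in> S" using f g FA(2) by (auto simp: S_def crossed_def)
    show "cp_mult \<sigma> f g \<in> S" using PROD f g by blast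
  next
    fix c f assume f: "f \<in> S"
    have "{n. (\<lambda>x. c * f n x) \<noteq> (\<lambda>_. 0)} \<subseteq> {k. f k \<noteq> (\<lambda>_. 0)}"
      by auto
    then have "finite {n. (\<lambda>x. c * f n x) \<noteq> (\<lambda>_. 0)}"
      by (rule finite_subset) (use f in \<open>auto simp: S_def crossed_def\<close>)
    then show "(\<lambda>n x. c * f n x) \<in> S" using f FA(3) by (auto simp: S_def crossed_def)
  qed
  have MAX: "B \<subseteq> S" if B: "cp_subalgebra A \<sigma> B" "embed ` A \<subseteq> B" "cp_commutative \<sigma> B" for B
  proof
    fix f assume f: "f \<in> B"
    have "f \<in> crossed A" using B(1) f by (auto simp: cp_subalgebra_def)
    moreover have "\<forall>a\<in>A. cp_mult \<sigma> f (embed a) = cp_mult \<sigma> (embed a) f"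
      using B(2,3) f by (auto simp: cp_commutative_def)
    ultimately have "f \<in> commutant A \<sigma>" by (simp add: commutant_def)
    then show "f \<in> S" using C by simp
  qed
  show ?thesis using C SUB E COMM MAX by (auto simp: cp_commutative_def)
qed

end
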